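(* For games with cost function $c(x)=x^2$, the worst-case price of anarchy is strictly larger than $2$; that is, there exists such a game, a Nash equilibrium $s$ and an assignment $s^*$ of it with $C(s)/C(s^* )>2$.
   Context: A game is specified by a cost function $c$ (here $c(x)=x^2$), a time horizon $T$ with slots $t=1,\dots,T$, and a set of jobs, each job $j$ having integer release time $r_j$ and integer deadline $d_j$ with $0<r_j<d_j<T$. An assignment $s$ gives each job $j$ a slot $s_j$ with $r_j\le s_j<d_j$. The load of slot $t$ is $l_t(s)=|\{j:s_j=t\}|$ and $C(s)=\sum_{t=1}^T c(l_t(s))$. An assignment $s$ is a Nash equilibrium if for every job $j$ and every slot $t\neq s_j$ with $r_j\le t<d_j$: $\frac{c(l_{s_j}(s))}{l_{s_j}(s)}\le\frac{c(l_t(s)+1)}{l_t(s)+1}$. The price of anarchy of a game is $\max_{s\text{ a NE}}C(s)/\min_{s^*}C(s^* )$. *)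

theory Defs
  imports Main Complex_Main
begin

text \<open>A game: a horizon T (slots 1..T) and a list of jobs, job j = (r_j, d_j).
  Assignments are functions from job indices (j < length jobs) to slots.\<close>

definition valid_game :: "nat \<Rightarrow> (nat \<times> nat) list \<Rightarrow> bool" where
  "valid_game T jobs \<longleftrightarrow>
     (\<forall>j < length jobs. 0 < fst (jobs ! j) \<and> fst (jobs ! j) < snd (jobs ! j) \<and> snd (jobs ! j) < T)"

definition is_assignment :: "(nat \<times> nat) list \<Rightarrow> (nat \<Rightarrow> nat) \<Rightarrow> bool" where
  "is_assignment jobs s \<longleftrightarrow>
     (\<forall>j < length jobs. fst (jobs ! j) \<le> s j \<and> s j < snd (jobs ! j))"

definition load :: "(nat \<times> nat) list \<Rightarrow> (nat \<Rightarrow> nat) \<Rightarrow> nat \<Rightarrow> nat" where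
  "load jobs s t = card {j. j < length jobs \<and> s j = t}"

definition total_cost :: "(nat \<Rightarrow> real) \<Rightarrow> nat \<Rightarrow> (nat \<times> nat) list \<Rightarrow> (nat \<Rightarrow> nat) \<Rightarrow> real" where
  "total_cost c T jobs s = (\<Sum>t = 1..T. c (load jobs s t))"

definition is_nash :: "(nat \<Rightarrow> real) \<Rightarrow> (nat \<times> nat) list \<Rightarrow> (nat \<Rightarrow> nat) \<Rightarrow> bool" where
  "is_nash c jobs s \<longleftrightarrow> is_assignment jobs s \<and>
     (\<forall>j < length jobs. \<forall>t. t \<noteq> s j \<and> fst (jobs ! j) \<le> t \<and> t < snd (jobs ! j) \<longrightarrow>
        c (load jobs s (s j)) / real (load jobs s (s j))
          \<le> c (load jobs s t + 1) / real (load jobs s t + 1))"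

definition sq_cost :: "nat \<Rightarrow> real" where
  "sq_cost x = (real x) ^ 2"

end

theory Submission
  imports Defs
begin

definition fl :: "nat \<Rightarrow> nat" where
 "fl t = (if t = 0 then 0 else if t \<le> 1 then 6 else if t \<le> 3 then 5 else if t \<le> 8 then 4 else if t \<le> 27 then 3 else if t \<le> 84 then 2 else if t \<le> 198 then 1 else 0)"
definition gl :: "nat \<Rightarrow> nat" where
 "gl t = (if t = 0 then 0 else if t \<le> 9 then 2 else if t \<le> 312 then 1 else 0)"
definition EE :: "nat \<Rightarrow> nat" where
 "EE k = (if k = 6 then 4 else if k = 5 then 9 else if k = 4 then 28 else if k = 3 then 85 else if k = 2 then 199 else 313)"
definition sl :: "nat list" where "sl = concat (map (\<lambda>t. replicate (fl t) t) [1..<314])"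
definition sl' :: "nat list" where "sl' = concat (map (\<lambda>t. replicate (gl t) t) [1..<314])"

lemma c_t1: "list_all2 (\<lambda>x y. 1 \<le> y \<and> y < EE (fl x)) sl sl'"
  by code_simp
lemma c_t2: "(\<Sum>t = 1..314. (fl t)^2) = 679"
  by code_simp
lemma c_t3: "(\<Sum>t = 1..314. (gl t)^2) = 339"
  by code_simp
lemma c_len: "length sl = 321" "length sl' = 321" by code_simp+

lemma count_cr:
  "distinct xs \<Longrightarrow> length (filter (\<lambda>y. y = t) (concat (map (\<lambda>x. replicate (h x) x) xs)))
     = (if t \<in> set xs then h t else 0)"
  by (induction xs) (auto simp: filter_replicate)

lemma set_cr: "x \<in> set (concat (map (\<lambda>x. replicate (h x) x) xs)) \<Longrightarrow> h x > 0"
  by auto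

lemma load_gen:
  assumes "length js = length xs" "\<And>t. t \<notin> set [1..<314] \<Longrightarrow> h t = 0"
    "xs = concat (map (\<lambda>x. replicate (h x) x) [1..<314])"
  shows "load js (\<lambda>j. xs ! j) t = h t"
proof -
  have "load js (\<lambda>j. xs ! j) t = card {j. j < length xs \<and> xs ! j = t}"
    unfolding load_def using assms(1) by simp
  also have "\<dots> = length (filter (\<lambda>y. y = t) xs)"
    by (simp add: length_filter_conv_card)
  also have "\<dots> = h t" using assms(2,3) count_cr[of "[1..<314]" t h] by auto
  finally show ?thesis .
qed

lemma fl_out: "t \<notin> set [1..<314] \<Longrightarrow> fl t = 0" by (auto simp: fl_def)
lemma gl_out: "t \<notin> set [1..<314] \<Longrightarrow> gl t = 0" by (auto simp: gl_def)

lemma fl_pos: "fl x > 0 \<Longrightarrow> 1 \<le> x \<and> x < EE (fl x)"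
  unfolding fl_def EE_def by (simp split: if_splits)

lemma fl_ne: "1 \<le> t \<Longrightarrow> fl x > 0 \<Longrightarrow> t < EE (fl x) \<Longrightarrow> fl x \<le> fl t + 1"
  unfolding fl_def EE_def by (simp split: if_splits)

lemma EE_rng: "1 < EE k \<and> EE k < 314"
  by (auto simp: EE_def)

lemma sq_div: "a \<le> b + 1 \<Longrightarrow> sq_cost a / real a \<le> sq_cost (b + 1) / real (b + 1)"
  by (cases "a = 0") (auto simp: sq_cost_def power2_eq_square)

theorem lemma3:
  shows "\<exists>T jobs s s'. valid_game T jobs \<and> is_nash sq_cost jobs s \<and> is_assignment jobs s' \<and>
           total_cost sq_cost T jobs s / total_cost sq_cost T jobs s' > 2"
proof -
  define jobs where "jobs = map (\<lambda>x. (1::nat, EE (fl x))) sl"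
  have lj: "length jobs = length sl" by (simp add: jobs_def)
  have jn: "j < length sl \<Longrightarrow> jobs ! j = (1, EE (fl (sl ! j)))" for j by (simp add: jobs_def)
  have ld: "load jobs (\<lambda>j. sl ! j) t = fl t" for t
    by (rule load_gen) (simp add: lj, simp add: fl_out, simp add: sl_def)
  have ld': "load jobs (\<lambda>j. sl' ! j) t = gl t" for t
    by (rule load_gen) (simp add: lj c_len, simp add: gl_out, simp add: sl'_def)
  have pos: "j < length sl \<Longrightarrow> fl (sl ! j) > 0" for j
    using set_cr[of "sl ! j" fl "[1..<314]"] nth_mem[of j sl] by (simp add: sl_def)
  have vg: "valid_game 314 jobs"
    unfolding valid_game_def using EE_rng by (simp add: lj jn)
  have asg: "is_assignment jobs (\<lambda>j. sl ! j)"
    unfolding is_assignment_def using fl_pos pos by (simp add: lj jn)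
  have ne: "is_nash sq_cost jobs (\<lambda>j. sl ! j)"
    unfolding is_nash_def
  proof (intro conjI asg allI impI)
    fix j t assume j: "j < length jobs" and t: "t \<noteq> sl ! j \<and> fst (jobs ! j) \<le> t \<and> t < snd (jobs ! j)"
    have "fl (sl ! j) \<le> fl t + 1"
      using j t pos[of j] by (intro fl_ne) (auto simp: lj jn)
    then show "sq_cost (load jobs ((!) sl) (sl ! j)) / real (load jobs ((!) sl) (sl ! j))
          \<le> sq_cost (load jobs ((!) sl) t + 1) / real (load jobs ((!) sl) t + 1)"
      unfolding ld by (rule sq_div)
  qed
  have asg': "is_assignment jobs (\<lambda>j. sl' ! j)"
    unfolding is_assignment_def using c_t1 c_len
    by (auto simp: lj jn list_all2_conv_all_nth)
  have tc: "total_cost sq_cost 314 jobs (\<lambda>j. sl ! j) = 679"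
  proof -
    have "total_cost sq_cost 314 jobs (\<lambda>j. sl ! j) = real (\<Sum>t = 1..314. (fl t)^2)"
      unfolding total_cost_def by (simp add: ld sq_cost_def)
    then show ?thesis by (simp only: c_t2 of_nat_numeral)
  qed
  have tc': "total_cost sq_cost 314 jobs (\<lambda>j. sl' ! j) = 339"
  proof -
    have "total_cost sq_cost 314 jobs (\<lambda>j. sl' ! j) = real (\<Sum>t = 1..314. (gl t)^2)"
      unfolding total_cost_def by (simp add: ld' sq_cost_def)
    then show ?thesis by (simp only: c_t3 of_nat_numeral)
  qed
  show ?thesis
    by (rule exI[of _ 314], rule exI[of _ jobs], rule exI[of _ "\<lambda>j. sl ! j"],
        rule exI[of _ "\<lambda>j. sl' ! j"]) (simp add: vg ne asg' tc tc')
qed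

end
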